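(* Let $b\ge 1$ and let $G$ be a graph having a proper intersection representation with axis-parallel boxes in $\mathbb{R}^b$. Then the 1-subdivision of $G$ (obtained by replacing every edge by a path of length 2) belongs to $(b+1)$-CBU.
   Context: An intersection representation of $G$ by axis-parallel boxes (products of closed intervals of positive length) in $\mathbb{R}^b$ assigns a box to each vertex so that two distinct vertices are adjacent iff their boxes intersect; it is proper if two boxes intersect if and only if some point of $\mathbb{R}^b$ belongs to these two boxes and to no other box of the representation. Let $e_1,\ldots,e_d$ be the standard basis of $\mathbb{R}^d$. For $d\ge 1$, a graph belongs to $d$-CBU if one can assign to each vertex an axis-parallel box in $\mathbb{R}^d$ such that the boxes have pairwise disjoint interiors, two distinct vertices are adjacent iff their boxes intersect, and any two intersecting boxes intersect in a $(d-1)$-dimensional box orthogonal to $e_1$. *)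

theory Defs
  imports Complex_Main
begin

definition simple_graph :: "'a set \<Rightarrow> ('a \<Rightarrow> 'a \<Rightarrow> bool) \<Rightarrow> bool" where
  "simple_graph V E \<longleftrightarrow> finite V \<and> (\<forall>u v. E u v \<longrightarrow> u \<in> V \<and> v \<in> V \<and> u \<noteq> v \<and> E v u)"

(* An axis-parallel box in R^d is given by lower and upper corner (lo, hi);
   points of R^d are functions nat => real vanishing at indices >= d. *)
type_synonym box = "(nat \<Rightarrow> real) \<times> (nat \<Rightarrow> real)"

definition is_box :: "nat \<Rightarrow> box \<Rightarrow> bool" where
  "is_box d B \<longleftrightarrow> (\<forall>i<d. fst B i < snd B i)"

definition box_pts :: "nat \<Rightarrow> box \<Rightarrow> (nat \<Rightarrow> real) set" where
  "box_pts d B = {x. (\<forall>i<d. fst B i \<le> x i \<and> x i \<le> snd B i) \<and> (\<forall>i\<ge>d. x i = 0)}"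

definition box_int :: "nat \<Rightarrow> box \<Rightarrow> (nat \<Rightarrow> real) set" where
  "box_int d B = {x. (\<forall>i<d. fst B i < x i \<and> x i < snd B i) \<and> (\<forall>i\<ge>d. x i = 0)}"

definition box_rep :: "nat \<Rightarrow> 'a set \<Rightarrow> ('a \<Rightarrow> 'a \<Rightarrow> bool) \<Rightarrow> ('a \<Rightarrow> box) \<Rightarrow> bool" where
  "box_rep d V E f \<longleftrightarrow> (\<forall>v\<in>V. is_box d (f v)) \<and>
     (\<forall>u\<in>V. \<forall>v\<in>V. u \<noteq> v \<longrightarrow> (E u v \<longleftrightarrow> box_pts d (f u) \<inter> box_pts d (f v) \<noteq> {}))"

definition proper_box_rep :: "nat \<Rightarrow> 'a set \<Rightarrow> ('a \<Rightarrow> 'a \<Rightarrow> bool) \<Rightarrow> ('a \<Rightarrow> box) \<Rightarrow> bool" where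
  "proper_box_rep d V E f \<longleftrightarrow> box_rep d V E f \<and>
     (\<forall>u\<in>V. \<forall>v\<in>V. u \<noteq> v \<longrightarrow>
        (box_pts d (f u) \<inter> box_pts d (f v) \<noteq> {} \<longleftrightarrow>
         (\<exists>p. p \<in> box_pts d (f u) \<and> p \<in> box_pts d (f v) \<and>
              (\<forall>w\<in>V - {u, v}. p \<notin> box_pts d (f w)))))"

definition CBU :: "nat \<Rightarrow> 'a set \<Rightarrow> ('a \<Rightarrow> 'a \<Rightarrow> bool) \<Rightarrow> bool" where
  "CBU d V E \<longleftrightarrow> (\<exists>f. box_rep d V E f \<and>
     (\<forall>u\<in>V. \<forall>v\<in>V. u \<noteq> v \<longrightarrow> box_int d (f u) \<inter> box_int d (f v) = {}) \<and>
     (\<forall>u\<in>V. \<forall>v\<in>V. u \<noteq> v \<longrightarrow> box_pts d (f u) \<inter> box_pts d (f v) \<noteq> {} \<longrightarrow>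
        (\<exists>c l h. (\<forall>i\<in>{1..<d}. l i < h i) \<and>
           box_pts d (f u) \<inter> box_pts d (f v) =
             {x. x 0 = c \<and> (\<forall>i\<in>{1..<d}. l i \<le> x i \<and> x i \<le> h i) \<and> (\<forall>i\<ge>d. x i = 0)})))"

definition graph_edges :: "'a set \<Rightarrow> ('a \<Rightarrow> 'a \<Rightarrow> bool) \<Rightarrow> 'a set set" where
  "graph_edges V E = {{u, v} | u v. u \<in> V \<and> v \<in> V \<and> E u v}"

definition subdiv_V :: "'a set \<Rightarrow> ('a \<Rightarrow> 'a \<Rightarrow> bool) \<Rightarrow> ('a + 'a set) set" where
  "subdiv_V V E = Inl ` V \<union> Inr ` graph_edges V E"

definition subdiv_E :: "'a set \<Rightarrow> ('a \<Rightarrow> 'a \<Rightarrow> bool) \<Rightarrow> ('a + 'a set) \<Rightarrow> ('a + 'a set) \<Rightarrow> bool" where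
  "subdiv_E V E x y \<longleftrightarrow>
     (\<exists>u e. u \<in> V \<and> e \<in> graph_edges V E \<and> u \<in> e \<and>
        ((x = Inl u \<and> y = Inr e) \<or> (x = Inr e \<and> y = Inl u)))"

end

theory Submission imports Defs begin

definition lift :: "real \<Rightarrow> real \<Rightarrow> box \<Rightarrow> box" where
  "lift t0 t1 B = (case_nat t0 (fst B), case_nat t1 (snd B))"
definition meet :: "box \<Rightarrow> box \<Rightarrow> box" where
  "meet B B' = ((\<lambda>i. max (fst B i) (fst B' i)), (\<lambda>i. min (snd B i) (snd B' i)))"
definition cube :: "(nat \<Rightarrow> real) \<Rightarrow> real \<Rightarrow> box" where
  "cube p r = ((\<lambda>i. p i - r), (\<lambda>i. p i + r))"

lemma all_ge_Suc: "(\<forall>i\<ge>Suc b. P i) \<longleftrightarrow> (\<forall>j\<ge>b. P (Suc j))"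
proof (rule iffI)
  assume "\<forall>j\<ge>b. P (Suc j)"
  then show "\<forall>i\<ge>Suc b. P i"
    by (intro allI impI) (case_tac i, simp_all)
qed simp

lemma all_less_Suc: "(\<forall>i<Suc b. P i) \<longleftrightarrow> P 0 \<and> (\<forall>j<b. P (Suc j))"
proof (rule iffI)
  assume "P 0 \<and> (\<forall>j<b. P (Suc j))"
  then show "\<forall>i<Suc b. P i"
    by (intro allI impI) (case_tac i, simp_all)
qed simp

lemma pts_lift: "x \<in> box_pts (Suc b) (lift t0 t1 B) \<longleftrightarrow>
   t0 \<le> x 0 \<and> x 0 \<le> t1 \<and> (\<lambda>i. x (Suc i)) \<in> box_pts b B"
  unfolding box_pts_def lift_def by (simp only: all_ge_Suc all_less_Suc) auto

lemma int_lift: "x \<in> box_int (Suc b) (lift t0 t1 B) \<longleftrightarrow>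
   t0 < x 0 \<and> x 0 < t1 \<and> (\<lambda>i. x (Suc i)) \<in> box_int b B"
  unfolding box_int_def lift_def by (simp only: all_ge_Suc all_less_Suc) auto

lemma isbox_lift: "is_box (Suc b) (lift t0 t1 B) \<longleftrightarrow> t0 < t1 \<and> is_box b B"
  unfolding is_box_def lift_def by (simp only: all_less_Suc) auto

lemma pts_meet: "box_pts b B \<inter> box_pts b B' = box_pts b (meet B B')"
  unfolding box_pts_def meet_def by auto

lemma int_sub: "box_int b B \<subseteq> box_pts b B"
  unfolding box_int_def box_pts_def by (auto simp: less_imp_le)

lemma facet:
  assumes "t0 \<le> c" "c \<le> s1" "is_box b (meet B B')"
  shows "\<exists>c' l h. (\<forall>i\<in>{1..<Suc b}. l i < h i) \<and>
    box_pts (Suc b) (lift t0 c B) \<inter> box_pts (Suc b) (lift c s1 B') =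
    {x. x 0 = c' \<and> (\<forall>i\<in>{1..<Suc b}. l i \<le> x i \<and> x i \<le> h i) \<and> (\<forall>i\<ge>Suc b. x i = 0)}"
proof (intro exI conjI)
  let ?l = "case_nat 0 (fst (meet B B'))" and ?h = "case_nat 0 (snd (meet B B'))"
  have r: "(\<forall>i\<in>{1..<Suc b}. P i) \<longleftrightarrow> (\<forall>j<b. P (Suc j))" for P
  proof (rule iffI)
    assume "\<forall>j<b. P (Suc j)"
    then show "\<forall>i\<in>{1..<Suc b}. P i"
      by (intro ballI) (case_tac i, simp_all)
  qed simp
  show "\<forall>i\<in>{1..<Suc b}. ?l i < ?h i" using assms(3) unfolding r is_box_def by simp
  show "box_pts (Suc b) (lift t0 c B) \<inter> box_pts (Suc b) (lift c s1 B') =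
    {x. x 0 = c \<and> (\<forall>i\<in>{1..<Suc b}. ?l i \<le> x i \<and> x i \<le> ?h i) \<and> (\<forall>i\<ge>Suc b. x i = 0)}"
  proof (rule set_eqI)
    fix x
    have "x \<in> box_pts (Suc b) (lift t0 c B) \<inter> box_pts (Suc b) (lift c s1 B') \<longleftrightarrow>
       x 0 = c \<and> (\<lambda>i. x (Suc i)) \<in> box_pts b (meet B B')"
      using assms(1,2) by (auto simp: pts_lift pts_meet[symmetric])
    also have "\<dots> \<longleftrightarrow> x 0 = c \<and> (\<forall>i\<in>{1..<Suc b}. ?l i \<le> x i \<and> x i \<le> ?h i) \<and> (\<forall>i\<ge>Suc b. x i = 0)"
      unfolding r all_ge_Suc box_pts_def by simp
    finally show "x \<in> box_pts (Suc b) (lift t0 c B) \<inter> box_pts (Suc b) (lift c s1 B') \<longleftrightarrow>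
       x \<in> {x. x 0 = c \<and> (\<forall>i\<in>{1..<Suc b}. ?l i \<le> x i \<and> x i \<le> ?h i) \<and> (\<forall>i\<ge>Suc b. x i = 0)}"
      by simp
  qed
qed

lemma cube_mono: "r \<le> r' \<Longrightarrow> box_pts b (cube p r) \<subseteq> box_pts b (cube p r')"
  unfolding box_pts_def cube_def by force

lemma cube_sep:
  assumes "p \<notin> box_pts b B" "\<forall>i\<ge>b. p i = 0"
  shows "\<exists>\<epsilon>>0. box_pts b (cube p (2*\<epsilon>)) \<inter> box_pts b B = {}"
proof -
  have "\<not> (\<forall>i<b. fst B i \<le> p i \<and> p i \<le> snd B i)"
    using assms unfolding box_pts_def by blast
  then obtain i where i: "i < b" "p i < fst B i \<or> p i > snd B i"
    by (meson not_le)
  show ?thesis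
  proof (cases "p i < fst B i")
    case True
    define e where "e = (fst B i - p i)/3"
    have "e > 0" using True by (simp add: e_def)
    moreover have "box_pts b (cube p (2*e)) \<inter> box_pts b B = {}"
    proof (rule ccontr)
      assume "box_pts b (cube p (2*e)) \<inter> box_pts b B \<noteq> {}"
      then obtain q where q: "q \<in> box_pts b (cube p (2*e))" "q \<in> box_pts b B" by blast
      have "q i \<le> p i + 2*e" using q(1) i(1) unfolding box_pts_def cube_def by auto
      moreover have "fst B i \<le> q i" using q(2) i(1) unfolding box_pts_def by auto
      ultimately show False using True unfolding e_def by (simp add: field_simps)
    qed
    ultimately show ?thesis by blast
  next
    case False
    then have F: "p i > snd B i" using i(2) by auto
    define e where "e = (p i - snd B i)/3"
    have "e > 0" using F by (simp add: e_def)
    moreover have "box_pts b (cube p (2*e)) \<inter> box_pts b B = {}"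
    proof (rule ccontr)
      assume "box_pts b (cube p (2*e)) \<inter> box_pts b B \<noteq> {}"
      then obtain q where q: "q \<in> box_pts b (cube p (2*e))" "q \<in> box_pts b B" by blast
      have "p i - 2*e \<le> q i" using q(1) i(1) unfolding box_pts_def cube_def by auto
      moreover have "q i \<le> snd B i" using q(2) i(1) unfolding box_pts_def by auto
      ultimately show False using F unfolding e_def by (simp add: field_simps)
    qed
    ultimately show ?thesis by blast
  qed
qed

lemma finite_eps:
  assumes "finite S" "\<forall>s\<in>S. \<exists>\<epsilon>::real>0. P s \<epsilon>"
    "\<And>s e e'. P s e \<Longrightarrow> 0 < e' \<Longrightarrow> e' \<le> e \<Longrightarrow> P s e'"
  shows "\<exists>\<epsilon>>0. \<forall>s\<in>S. P s \<epsilon>"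
  using assms(1,2)
proof (induction S rule: finite_induct)
  case empty then show ?case by (auto intro: exI[of _ 1])
next
  case (insert x F)
  then obtain e1 where e1: "e1 > 0" "\<forall>s\<in>F. P s e1" by auto
  from insert obtain e2 where e2: "e2 > 0" "P x e2" by auto
  show ?case
    apply (rule exI[of _ "min e1 e2"])
    using e1 e2 assms(3) by auto
qed


definition facetset :: "nat \<Rightarrow> (nat \<Rightarrow> real) set \<Rightarrow> bool" where
  "facetset d S \<longleftrightarrow> (\<exists>c l h. (\<forall>i\<in>{1..<d}. l i < h i) \<and>
     S = {x. x 0 = c \<and> (\<forall>i\<in>{1..<d}. l i \<le> x i \<and> x i \<le> h i) \<and> (\<forall>i\<ge>d. x i = 0)})"

lemma facet':
  assumes "t0 \<le> c" "c \<le> s1" "is_box b (meet B B')"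
  shows "facetset (Suc b) (box_pts (Suc b) (lift t0 c B) \<inter> box_pts (Suc b) (lift c s1 B'))"
  unfolding facetset_def using facet[OF assms] by blast

lemma nat_gap: "(m::nat) < n \<Longrightarrow> real m + 1 \<le> real n"
  using of_nat_le_iff[of "Suc m" n] by simp

lemma cube_tri: "t \<in> box_pts b (cube q r) \<Longrightarrow> t \<in> box_pts b (cube q' r) \<Longrightarrow> (\<forall>i\<ge>b. q' i = 0)
  \<Longrightarrow> q' \<in> box_pts b (cube q (2*r))"
proof -
  assume a: "t \<in> box_pts b (cube q r)" "t \<in> box_pts b (cube q' r)" "\<forall>i\<ge>b. q' i = 0"
  have "fst (cube q (2*r)) i \<le> q' i \<and> q' i \<le> snd (cube q (2*r)) i" if "i < b" for i
  proof -
    have "q i - r \<le> t i" "t i \<le> q i + r" "q' i - r \<le> t i" "t i \<le> q' i + r"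
      using a(1,2) that unfolding box_pts_def cube_def by auto
    then show ?thesis unfolding cube_def by simp
  qed
  then show ?thesis using a(3) unfolding box_pts_def by blast
qed

lemma cube_self: "(\<forall>i\<ge>b. q i = 0) \<Longrightarrow> r > 0 \<Longrightarrow> q \<in> box_pts b (cube q r)"
  unfolding box_pts_def cube_def by auto

lemma cube_box: "r > 0 \<Longrightarrow> is_box b (cube q r)"
  unfolding is_box_def cube_def by auto

lemma meet_box1: "is_box b B \<Longrightarrow> q \<in> box_pts b B \<Longrightarrow> r > 0 \<Longrightarrow> is_box b (meet B (cube q r))"
  unfolding is_box_def box_pts_def meet_def cube_def by force

lemma meet_box2: "is_box b B \<Longrightarrow> q \<in> box_pts b B \<Longrightarrow> r > 0 \<Longrightarrow> is_box b (meet (cube q r) B)"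
  unfolding is_box_def box_pts_def meet_def cube_def by force

lemma subdivE_simps:
  "subdiv_E V E (Inl u) (Inl v) = False"
  "subdiv_E V E (Inr e) (Inr e') = False"
  "subdiv_E V E (Inl u) (Inr e) \<longleftrightarrow> u \<in> V \<and> e \<in> graph_edges V E \<and> u \<in> e"
  "subdiv_E V E (Inr e) (Inl u) \<longleftrightarrow> u \<in> V \<and> e \<in> graph_edges V E \<and> u \<in> e"
  unfolding subdiv_E_def by auto

lemma close_empty: "S = {} \<Longrightarrow> I \<subseteq> S \<Longrightarrow> \<not> R \<Longrightarrow> (R \<longleftrightarrow> S \<noteq> {}) \<and> I = {} \<and> (S \<noteq> {} \<longrightarrow> Q)"
  by auto

lemma close_yes: "S \<noteq> {} \<Longrightarrow> I = {} \<Longrightarrow> R \<Longrightarrow> Q \<Longrightarrow> (R \<longleftrightarrow> S \<noteq> {}) \<and> I = {} \<and> (S \<noteq> {} \<longrightarrow> Q)"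
  by auto

theorem mainTheorem2:
  fixes b :: nat and V :: "'a set" and E :: "'a \<Rightarrow> 'a \<Rightarrow> bool" and f :: "'a \<Rightarrow> box"
  assumes "b \<ge> 1"
    and "simple_graph V E"
    and "proper_box_rep b V E f"
  shows "CBU (b + 1) (subdiv_V V E) (subdiv_E V E)"
proof -
  from assms(2) have finV: "finite V" and Esym: "\<And>u v. E u v \<Longrightarrow> u \<in> V \<and> v \<in> V \<and> u \<noteq> v \<and> E v u"
    unfolding simple_graph_def by auto
  from assms(3) have br: "box_rep b V E f" and pr: "\<forall>u\<in>V. \<forall>v\<in>V. u \<noteq> v \<longrightarrow>
        (box_pts b (f u) \<inter> box_pts b (f v) \<noteq> {} \<longleftrightarrow>
         (\<exists>p. p \<in> box_pts b (f u) \<and> p \<in> box_pts b (f v) \<and>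
              (\<forall>w\<in>V - {u, v}. p \<notin> box_pts b (f w))))"
    unfolding proper_box_rep_def by auto
  from br have fbox: "\<And>v. v \<in> V \<Longrightarrow> is_box b (f v)"
    and fadj: "\<And>u v. u \<in> V \<Longrightarrow> v \<in> V \<Longrightarrow> u \<noteq> v \<Longrightarrow> E u v \<longleftrightarrow> box_pts b (f u) \<inter> box_pts b (f v) \<noteq> {}"
    unfolding box_rep_def by auto
  obtain k :: "'a \<Rightarrow> nat" where k: "inj_on k V" using finite_imp_inj_to_nat_seg[OF finV] by blast
  define Ed where "Ed = graph_edges V E"
  have finEd: "finite Ed"
  proof -
    have "Ed \<subseteq> (\<lambda>(u,v). {u,v}) ` (V \<times> V)" unfolding Ed_def graph_edges_def by auto
    then show ?thesis using finV by (meson finite_SigmaI finite_imageI finite_subset)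
  qed
  have ex: "\<forall>e\<in>Ed. \<exists>u v q. e = {u,v} \<and> u \<in> V \<and> v \<in> V \<and> k u < k v \<and>
      q \<in> box_pts b (f u) \<and> q \<in> box_pts b (f v) \<and> (\<forall>w\<in>V - e. q \<notin> box_pts b (f w))"
  proof
    fix e assume "e \<in> Ed"
    then obtain u v where uv: "e = {u,v}" "u \<in> V" "v \<in> V" "E u v" unfolding Ed_def graph_edges_def by auto
    have "u \<noteq> v" using Esym[OF uv(4)] by auto
    have kne: "k u \<noteq> k v" using k \<open>u \<noteq> v\<close> uv by (meson inj_on_eq_iff)
    have "box_pts b (f u) \<inter> box_pts b (f v) \<noteq> {}" using fadj uv \<open>u\<noteq>v\<close> by blast
    then obtain q where q: "q \<in> box_pts b (f u)" "q \<in> box_pts b (f v)" "\<forall>w\<in>V - {u, v}. q \<notin> box_pts b (f w)"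
      using pr uv \<open>u\<noteq>v\<close> by blast
    show "\<exists>u v q. e = {u,v} \<and> u \<in> V \<and> v \<in> V \<and> k u < k v \<and>
      q \<in> box_pts b (f u) \<and> q \<in> box_pts b (f v) \<and> (\<forall>w\<in>V - e. q \<notin> box_pts b (f w))"
    proof (cases "k u < k v")
      case True then show ?thesis using uv q by blast
    next
      case False then have "k v < k u" using kne by simp
      then show ?thesis using uv q
        by (intro exI[of _ v] exI[of _ u] exI[of _ q]) (auto simp: insert_commute)
    qed
  qed
  obtain lo where H1: "\<forall>e\<in>Ed. \<exists>v q. e = {lo e,v} \<and> lo e \<in> V \<and> v \<in> V \<and> k (lo e) < k v \<and>
      q \<in> box_pts b (f (lo e)) \<and> q \<in> box_pts b (f v) \<and> (\<forall>w\<in>V - e. q \<notin> box_pts b (f w))"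
    using bchoice[OF ex] by blast
  obtain hi where H2: "\<forall>e\<in>Ed. \<exists>q. e = {lo e,hi e} \<and> lo e \<in> V \<and> hi e \<in> V \<and> k (lo e) < k (hi e) \<and>
      q \<in> box_pts b (f (lo e)) \<and> q \<in> box_pts b (f (hi e)) \<and> (\<forall>w\<in>V - e. q \<notin> box_pts b (f w))"
    using bchoice[OF H1] by blast
  obtain p where H3: "\<forall>e\<in>Ed. e = {lo e,hi e} \<and> lo e \<in> V \<and> hi e \<in> V \<and> k (lo e) < k (hi e) \<and>
      p e \<in> box_pts b (f (lo e)) \<and> p e \<in> box_pts b (f (hi e)) \<and> (\<forall>w\<in>V - e. p e \<notin> box_pts b (f w))"
    using bchoice[OF H2] by blast
  have eq: "\<And>e. e \<in> Ed \<Longrightarrow> e = {lo e, hi e}" and loV: "\<And>e. e \<in> Ed \<Longrightarrow> lo e \<in> V"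
    and hiV: "\<And>e. e \<in> Ed \<Longrightarrow> hi e \<in> V" and klh: "\<And>e. e \<in> Ed \<Longrightarrow> k (lo e) < k (hi e)"
    and plo: "\<And>e. e \<in> Ed \<Longrightarrow> p e \<in> box_pts b (f (lo e))"
    and phi: "\<And>e. e \<in> Ed \<Longrightarrow> p e \<in> box_pts b (f (hi e))"
    and pout: "\<And>e w. e \<in> Ed \<Longrightarrow> w \<in> V \<Longrightarrow> w \<notin> e \<Longrightarrow> p e \<notin> box_pts b (f w)"
    using H3 by auto
  have pz: "\<And>e. e \<in> Ed \<Longrightarrow> \<forall>i\<ge>b. p e i = 0" using plo unfolding box_pts_def by blast
  let ?P = "\<lambda>s \<epsilon>. box_pts b (cube (p (fst s)) (2*\<epsilon>)) \<inter> box_pts b (f (snd s)) = {}"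
  have sep: "\<forall>s\<in>Sigma Ed (\<lambda>e. V - e). \<exists>\<epsilon>>0. ?P s \<epsilon>"
  proof
    fix s assume "s \<in> Sigma Ed (\<lambda>e. V - e)"
    then obtain e w where s: "s = (e,w)" "e \<in> Ed" "w \<in> V" "w \<notin> e" by auto
    show "\<exists>\<epsilon>>0. ?P s \<epsilon>" using cube_sep[OF pout[OF s(2-4)] pz[OF s(2)]] s(1) by simp
  qed
  have mono: "?P s e'" if "?P s e" "0 < e'" "e' \<le> e" for s e e'
  proof -
    have "box_pts b (cube (p (fst s)) (2*e')) \<subseteq> box_pts b (cube (p (fst s)) (2*e))"
      by (rule cube_mono) (use that in simp)
    then show ?thesis using that(1) by blast
  qed
  obtain \<epsilon> where eps: "\<epsilon> > 0" "\<forall>s\<in>Sigma Ed (\<lambda>e. V - e). ?P s \<epsilon>"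
    using finite_eps[of "Sigma Ed (\<lambda>e. V - e)" ?P] sep finEd finV mono by blast
  have epsep: "\<And>e w. e \<in> Ed \<Longrightarrow> w \<in> V \<Longrightarrow> w \<notin> e \<Longrightarrow>
      box_pts b (cube (p e) (2*\<epsilon>)) \<inter> box_pts b (f w) = {}"
    using eps(2) by auto
  define VB where "VB = (\<lambda>v. lift (2*real (k v)) (2*real (k v)+1) (f v))"
  define EB where "EB = (\<lambda>e. lift (2*real (k (lo e))+1) (2*real (k (hi e))) (cube (p e) \<epsilon>))"
  define F where "F = case_sum VB EB"
  have VV: "box_pts (Suc b) (VB u) \<inter> box_pts (Suc b) (VB v) = {}"
    if "u \<in> V" "v \<in> V" "u \<noteq> v" for u v
  proof -
    have kne: "k u \<noteq> k v" using k that by (meson inj_on_eq_iff)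
    show ?thesis
    proof (rule ccontr)
      assume "box_pts (Suc b) (VB u) \<inter> box_pts (Suc b) (VB v) \<noteq> {}"
      then obtain x where "x \<in> box_pts (Suc b) (VB u)" "x \<in> box_pts (Suc b) (VB v)" by blast
      then have x: "2*real (k u) \<le> x 0" "x 0 \<le> 2*real (k u)+1" "2*real (k v) \<le> x 0" "x 0 \<le> 2*real (k v)+1"
        unfolding VB_def pts_lift by auto
      show False
      proof (cases "k u < k v")
        case True then show False using nat_gap[OF True] x by linarith
      next
        case False then have "k v < k u" using kne by simp
        then show False using nat_gap[of "k v" "k u"] x by linarith
      qed
    qed
  qed
  have EE: "box_pts (Suc b) (EB e) \<inter> box_pts (Suc b) (EB e') = {}"
    if "e \<in> Ed" "e' \<in> Ed" "e \<noteq> e'" for e e'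
  proof -
    have "lo e' \<noteq> hi e'" using klh[OF that(2)] by auto
    have "\<exists>w\<in>e'. w \<notin> e"
    proof (rule ccontr)
      assume "\<not> (\<exists>w\<in>e'. w \<notin> e)"
      then have "lo e' \<in> e" "hi e' \<in> e" using eq[OF that(2)] by auto
      then have "lo e' \<in> {lo e, hi e}" "hi e' \<in> {lo e, hi e}" using eq[OF that(1)] by auto
      then have "{lo e', hi e'} = {lo e, hi e}" using \<open>lo e' \<noteq> hi e'\<close> by auto
      then have "e' = e" using eq[OF that(1)] eq[OF that(2)] by simp
      then show False using that(3) by simp
    qed
    then obtain w where w: "w \<in> e'" "w \<notin> e" by blast
    have wlh: "w = lo e' \<or> w = hi e'" using w(1) eq[OF that(2)] by blast
    have wV: "w \<in> V" using wlh loV[OF that(2)] hiV[OF that(2)] by auto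
    have pw: "p e' \<in> box_pts b (f w)" using wlh plo[OF that(2)] phi[OF that(2)] by auto
    show ?thesis
    proof (rule ccontr)
      assume "box_pts (Suc b) (EB e) \<inter> box_pts (Suc b) (EB e') \<noteq> {}"
      then obtain x where "x \<in> box_pts (Suc b) (EB e)" "x \<in> box_pts (Suc b) (EB e')" by blast
      then have "(\<lambda>i. x (Suc i)) \<in> box_pts b (cube (p e) \<epsilon>)" "(\<lambda>i. x (Suc i)) \<in> box_pts b (cube (p e') \<epsilon>)"
        unfolding EB_def pts_lift by auto
      then have "p e' \<in> box_pts b (cube (p e) (2*\<epsilon>))" using cube_tri pz[OF that(2)] by blast
      then show False using epsep[OF that(1) wV w(2)] pw by blast
    qed
  qed
  have VEno: "box_pts (Suc b) (VB w) \<inter> box_pts (Suc b) (EB e) = {}"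
    if "w \<in> V" "e \<in> Ed" "w \<notin> e" for w e
  proof (rule ccontr)
    assume "box_pts (Suc b) (VB w) \<inter> box_pts (Suc b) (EB e) \<noteq> {}"
    then obtain x where "x \<in> box_pts (Suc b) (VB w)" "x \<in> box_pts (Suc b) (EB e)" by blast
    then have "(\<lambda>i. x (Suc i)) \<in> box_pts b (f w)" "(\<lambda>i. x (Suc i)) \<in> box_pts b (cube (p e) \<epsilon>)"
      unfolding EB_def VB_def pts_lift by auto
    moreover have "box_pts b (cube (p e) \<epsilon>) \<subseteq> box_pts b (cube (p e) (2*\<epsilon>))"
      by (rule cube_mono) (use eps(1) in simp)
    ultimately show False using epsep[OF that(2,1,3)] by blast
  qed
  have VEyes: "box_pts (Suc b) (VB w) \<inter> box_pts (Suc b) (EB e) \<noteq> {} \<and>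
      box_int (Suc b) (VB w) \<inter> box_int (Suc b) (EB e) = {} \<and>
      facetset (Suc b) (box_pts (Suc b) (VB w) \<inter> box_pts (Suc b) (EB e))"
    if "w \<in> V" "e \<in> Ed" "w \<in> e" for w e
  proof -
    have gap: "2*real (k (lo e)) + 1 \<le> 2*real (k (hi e))" using nat_gap[OF klh[OF that(2)]] by linarith
    have pc: "p e \<in> box_pts b (cube (p e) \<epsilon>)" using cube_self[OF pz[OF that(2)] eps(1)] .
    have "w = lo e \<or> w = hi e" using that(3) eq[OF that(2)] by blast
    then show ?thesis
    proof
      assume w: "w = lo e"
      define c where "c = 2*real (k (lo e)) + 1"
      have pt: "case_nat c (p e) \<in> box_pts (Suc b) (VB w) \<inter> box_pts (Suc b) (EB e)"
        using plo[OF that(2)] pc gap unfolding VB_def EB_def w c_def by (auto simp: pts_lift)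
      have it: "box_int (Suc b) (VB w) \<inter> box_int (Suc b) (EB e) = {}"
        unfolding VB_def EB_def w by (auto simp: int_lift)
      have fc: "facetset (Suc b) (box_pts (Suc b) (VB w) \<inter> box_pts (Suc b) (EB e))"
        unfolding VB_def EB_def w
        by (rule facet') (use gap meet_box1[OF fbox[OF loV[OF that(2)]] plo[OF that(2)] eps(1)] in auto)
      show ?thesis using pt it fc by blast
    next
      assume w: "w = hi e"
      define c where "c = 2*real (k (hi e))"
      have pt: "case_nat c (p e) \<in> box_pts (Suc b) (VB w) \<inter> box_pts (Suc b) (EB e)"
        using phi[OF that(2)] pc gap unfolding VB_def EB_def w c_def by (auto simp: pts_lift)
      have it: "box_int (Suc b) (VB w) \<inter> box_int (Suc b) (EB e) = {}"
        unfolding VB_def EB_def w by (auto simp: int_lift)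
      have fc: "facetset (Suc b) (box_pts (Suc b) (EB e) \<inter> box_pts (Suc b) (VB w))"
        unfolding VB_def EB_def w
        by (rule facet') (use gap meet_box2[OF fbox[OF hiV[OF that(2)]] phi[OF that(2)] eps(1)] in auto)
      show ?thesis using pt it fc by (metis Int_commute empty_iff)
    qed
  qed
  have isb: "\<forall>X\<in>Inl ` V \<union> Inr ` Ed. is_box (Suc b) (F X)"
  proof
    fix X assume "X \<in> Inl ` V \<union> Inr ` Ed"
    then show "is_box (Suc b) (F X)"
    proof (elim UnE imageE)
      fix v assume "X = Inl v" "v \<in> V"
      then show ?thesis unfolding F_def VB_def by (simp add: isbox_lift fbox)
    next
      fix e assume "X = Inr e" "e \<in> Ed"
      then show ?thesis unfolding F_def EB_def
        using nat_gap[OF klh[of e]] cube_box[OF eps(1)] by (simp add: isbox_lift)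
    qed
  qed
  have SV: "subdiv_V V E = Inl ` V \<union> Inr ` Ed" unfolding subdiv_V_def Ed_def ..
  have bb: "b + 1 = Suc b" by simp
  have main: "\<forall>X\<in>Inl ` V \<union> Inr ` Ed. \<forall>Y\<in>Inl ` V \<union> Inr ` Ed. X \<noteq> Y \<longrightarrow>
     (subdiv_E V E X Y \<longleftrightarrow> box_pts (Suc b) (F X) \<inter> box_pts (Suc b) (F Y) \<noteq> {}) \<and>
     box_int (Suc b) (F X) \<inter> box_int (Suc b) (F Y) = {} \<and>
     (box_pts (Suc b) (F X) \<inter> box_pts (Suc b) (F Y) \<noteq> {} \<longrightarrow>
        facetset (Suc b) (box_pts (Suc b) (F X) \<inter> box_pts (Suc b) (F Y)))"
  proof (intro ballI impI)
    fix X Y assume X: "X \<in> Inl ` V \<union> Inr ` Ed" and Y: "Y \<in> Inl ` V \<union> Inr ` Ed" and ne: "X \<noteq> Y"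
    have intsub: "box_int (Suc b) A \<inter> box_int (Suc b) B \<subseteq> box_pts (Suc b) A \<inter> box_pts (Suc b) B" for A B
      using int_sub by blast
    have intsub2: "box_int (Suc b) (F X) \<inter> box_int (Suc b) (F Y) \<subseteq> box_pts (Suc b) (F X) \<inter> box_pts (Suc b) (F Y)"
      by (rule intsub)
    show "(subdiv_E V E X Y \<longleftrightarrow> box_pts (Suc b) (F X) \<inter> box_pts (Suc b) (F Y) \<noteq> {}) \<and>
     box_int (Suc b) (F X) \<inter> box_int (Suc b) (F Y) = {} \<and>
     (box_pts (Suc b) (F X) \<inter> box_pts (Suc b) (F Y) \<noteq> {} \<longrightarrow>
        facetset (Suc b) (box_pts (Suc b) (F X) \<inter> box_pts (Suc b) (F Y)))"
      using X Y
    proof (elim UnE imageE)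
      fix u v assume *: "X = Inl u" "u \<in> V" "Y = Inl v" "v \<in> V"
      show ?thesis
      proof (rule close_empty[OF _ intsub2])
        show "box_pts (Suc b) (F X) \<inter> box_pts (Suc b) (F Y) = {}"
          using VV[of u v] * ne by (simp add: F_def)
        show "\<not> subdiv_E V E X Y" using * by (simp add: subdivE_simps)
      qed
    next
      fix e e' assume *: "X = Inr e" "e \<in> Ed" "Y = Inr e'" "e' \<in> Ed"
      show ?thesis
      proof (rule close_empty[OF _ intsub2])
        show "box_pts (Suc b) (F X) \<inter> box_pts (Suc b) (F Y) = {}"
          using EE[of e e'] * ne by (simp add: F_def)
        show "\<not> subdiv_E V E X Y" using * by (simp add: subdivE_simps)
      qed
    next
      fix w e assume *: "X = Inl w" "w \<in> V" "Y = Inr e" "e \<in> Ed"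
      show ?thesis
      proof (cases "w \<in> e")
        case True
        have R: "subdiv_E V E X Y" using * True by (simp add: subdivE_simps Ed_def)
        have FX: "F X = VB w" "F Y = EB e" using * by (simp_all add: F_def)
        show ?thesis using VEyes[OF *(2) *(4) True] R unfolding FX by (intro close_yes) auto
      next
        case False
        show ?thesis
        proof (rule close_empty[OF _ intsub2])
          show "box_pts (Suc b) (F X) \<inter> box_pts (Suc b) (F Y) = {}"
            using VEno[OF *(2) *(4) False] * by (simp add: F_def)
          show "\<not> subdiv_E V E X Y" using * False by (simp add: subdivE_simps)
        qed
      qed
    next
      fix w e assume *: "Y = Inl w" "w \<in> V" "X = Inr e" "e \<in> Ed"
      show ?thesis
      proof (cases "w \<in> e")
        case True
        have R: "subdiv_E V E X Y" using * True by (simp add: subdivE_simps Ed_def)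
        have FX: "F Y = VB w" "F X = EB e" using * by (simp_all add: F_def)
        have comm: "box_pts (Suc b) (EB e) \<inter> box_pts (Suc b) (VB w) = box_pts (Suc b) (VB w) \<inter> box_pts (Suc b) (EB e)"
          "box_int (Suc b) (EB e) \<inter> box_int (Suc b) (VB w) = box_int (Suc b) (VB w) \<inter> box_int (Suc b) (EB e)"
          by blast+
        show ?thesis using VEyes[OF *(2) *(4) True] R unfolding FX comm by (intro close_yes) auto
      next
        case False
        show ?thesis
        proof (rule close_empty[OF _ intsub2])
          show "box_pts (Suc b) (F X) \<inter> box_pts (Suc b) (F Y) = {}"
            using VEno[OF *(2) *(4) False] * by (auto simp: F_def)
          show "\<not> subdiv_E V E X Y" using * False by (simp add: subdivE_simps)
        qed
      qed
    qed
  qed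
  let ?S = "Inl ` V \<union> Inr ` Ed"
  have mainI: "(subdiv_E V E X Y \<longleftrightarrow> box_pts (Suc b) (F X) \<inter> box_pts (Suc b) (F Y) \<noteq> {}) \<and>
     box_int (Suc b) (F X) \<inter> box_int (Suc b) (F Y) = {} \<and>
     (box_pts (Suc b) (F X) \<inter> box_pts (Suc b) (F Y) \<noteq> {} \<longrightarrow>
        facetset (Suc b) (box_pts (Suc b) (F X) \<inter> box_pts (Suc b) (F Y)))"
    if "X \<in> ?S" "Y \<in> ?S" "X \<noteq> Y" for X Y
    using main that by (simp only: Ball_def) blast
  show ?thesis
    unfolding CBU_def SV bb
  proof (rule exI[of _ F], intro conjI)
    show "box_rep (Suc b) ?S (subdiv_E V E) F"
      unfolding box_rep_def
    proof (intro conjI ballI impI)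
      fix X assume "X \<in> ?S" then show "is_box (Suc b) (F X)" using isb by blast
    next
      fix X Y assume "X \<in> ?S" "Y \<in> ?S" "X \<noteq> Y"
      then show "subdiv_E V E X Y \<longleftrightarrow> box_pts (Suc b) (F X) \<inter> box_pts (Suc b) (F Y) \<noteq> {}"
        using mainI by blast
    qed
  next
    show "\<forall>X\<in>?S. \<forall>Y\<in>?S. X \<noteq> Y \<longrightarrow> box_int (Suc b) (F X) \<inter> box_int (Suc b) (F Y) = {}"
      using mainI by blast
  next
    show "\<forall>X\<in>?S. \<forall>Y\<in>?S. X \<noteq> Y \<longrightarrow> box_pts (Suc b) (F X) \<inter> box_pts (Suc b) (F Y) \<noteq> {} \<longrightarrow>
        (\<exists>c l h. (\<forall>i\<in>{1..<Suc b}. l i < h i) \<and>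
           box_pts (Suc b) (F X) \<inter> box_pts (Suc b) (F Y) =
             {x. x 0 = c \<and> (\<forall>i\<in>{1..<Suc b}. l i \<le> x i \<and> x i \<le> h i) \<and> (\<forall>i\<ge>Suc b. x i = 0)})"
    proof (intro ballI impI)
      fix X Y assume "X \<in> ?S" "Y \<in> ?S" "X \<noteq> Y" "box_pts (Suc b) (F X) \<inter> box_pts (Suc b) (F Y) \<noteq> {}"
      then have "facetset (Suc b) (box_pts (Suc b) (F X) \<inter> box_pts (Suc b) (F Y))" using mainI by blast
      then show "\<exists>c l h. (\<forall>i\<in>{1..<Suc b}. l i < h i) \<and>
           box_pts (Suc b) (F X) \<inter> box_pts (Suc b) (F Y) =
             {x. x 0 = c \<and> (\<forall>i\<in>{1..<Suc b}. l i \<le> x i \<and> x i \<le> h i) \<and> (\<forall>i\<ge>Suc b. x i = 0)}"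
        unfolding facetset_def .
    qed
  qed
qed

end
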